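(* Let $G=(V,E)$ be an $(n-4)$-regular graph on $n>4$ nodes. Let $\emptyset\ne V'\subseteq V$ with $|V'|=tn$, and let $\alpha n$ be the number of nodes of a largest clique in the induced subgraph $G[V']$. Then $$\mathsf M(V')\le\frac{4t^2+2\alpha-3t}{n-4}.$$
   Context: For a finite simple undirected graph $G=(V,E)$ with $m=|E|\ge1$ edges, degrees $d_v$, and $a_{u,v}=1$ if $\{u,v\}\in E$ and $0$ otherwise: for $C\subseteq V$, $\mathsf M(C)=\frac{1}{2m}\sum_{u\in C}\sum_{v\in C}\big(a_{u,v}-\frac{d_ud_v}{2m}\big)$, the sum over all ordered pairs including $u=v$. *)

theory Defs
  imports Complex_Main
begin

definition simple_graph :: "'a set \<Rightarrow> ('a \<Rightarrow> 'a \<Rightarrow> bool) \<Rightarrow> bool" where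
  "simple_graph V E \<longleftrightarrow> finite V \<and> (\<forall>u v. E u v \<longrightarrow> E v u)
     \<and> (\<forall>u. \<not> E u u) \<and> (\<forall>u v. E u v \<longrightarrow> u \<in> V \<and> v \<in> V)"

definition degree :: "'a set \<Rightarrow> ('a \<Rightarrow> 'a \<Rightarrow> bool) \<Rightarrow> 'a \<Rightarrow> nat" where
  "degree V E v = card {u \<in> V. E v u}"

definition edges :: "'a set \<Rightarrow> ('a \<Rightarrow> 'a \<Rightarrow> bool) \<Rightarrow> 'a set set" where
  "edges V E = {{u, v} | u v. u \<in> V \<and> v \<in> V \<and> E u v}"

definition num_edges :: "'a set \<Rightarrow> ('a \<Rightarrow> 'a \<Rightarrow> bool) \<Rightarrow> nat" where
  "num_edges V E = card (edges V E)"

definition adj :: "('a \<Rightarrow> 'a \<Rightarrow> bool) \<Rightarrow> 'a \<Rightarrow> 'a \<Rightarrow> real" where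
  "adj E u v = (if E u v then 1 else 0)"

definition modularity :: "'a set \<Rightarrow> ('a \<Rightarrow> 'a \<Rightarrow> bool) \<Rightarrow> 'a set \<Rightarrow> real" where
  "modularity V E C = (let m = real (num_edges V E) in
     (1 / (2 * m)) * (\<Sum>u\<in>C. \<Sum>v\<in>C.
        adj E u v - real (degree V E u) * real (degree V E v) / (2 * m)))"

definition regular :: "'a set \<Rightarrow> ('a \<Rightarrow> 'a \<Rightarrow> bool) \<Rightarrow> nat \<Rightarrow> bool" where
  "regular V E k \<longleftrightarrow> (\<forall>v\<in>V. degree V E v = k)"

definition is_clique_in :: "('a \<Rightarrow> 'a \<Rightarrow> bool) \<Rightarrow> 'a set \<Rightarrow> 'a set \<Rightarrow> bool" where
  "is_clique_in E W K \<longleftrightarrow> K \<subseteq> W \<and> (\<forall>u\<in>K. \<forall>v\<in>K. u \<noteq> v \<longrightarrow> E u v)"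

definition clique_number :: "('a \<Rightarrow> 'a \<Rightarrow> bool) \<Rightarrow> 'a set \<Rightarrow> nat" where
  "clique_number E W = Max {card K | K. is_clique_in E W K}"

end

theory Submission
  imports Defs
begin

lemma handshake:
  assumes G: "simple_graph V E"
  shows "2 * num_edges V E = (\<Sum>u\<in>V. degree V E u)"
proof -
  have fin: "finite V" and sym: "\<And>u v. E u v \<Longrightarrow> E v u" and irr: "\<And>u. \<not> E u u"
    and inV: "\<And>u v. E u v \<Longrightarrow> u \<in> V \<and> v \<in> V"
    using G unfolding simple_graph_def by auto
  have sub: "edges V E \<subseteq> Pow V" unfolding edges_def by auto
  have finE: "finite (edges V E)" using sub fin by (meson finite_Pow_iff finite_subset)
  have c2: "\<forall>e\<in>edges V E. card {u\<in>V. u \<in> e} = 2"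
  proof
    fix e assume "e \<in> edges V E"
    then obtain u v where e: "e = {u,v}" "u \<in> V" "v \<in> V" "E u v" unfolding edges_def by auto
    have "u \<noteq> v" using e(4) irr by auto
    moreover have "{w\<in>V. w \<in> e} = {u,v}" using e by auto
    ultimately show "card {u\<in>V. u \<in> e} = 2" by simp
  qed
  have deg: "card {e\<in>edges V E. u \<in> e} = degree V E u" if "u \<in> V" for u
  proof -
    have "bij_betw (\<lambda>v. {u,v}) {v\<in>V. E u v} {e\<in>edges V E. u \<in> e}"
    proof (rule bij_betwI')
      show "\<And>x y. x \<in> {v \<in> V. E u v} \<Longrightarrow> y \<in> {v \<in> V. E u v} \<Longrightarrow> ({u, x} = {u, y}) = (x = y)"
        by (metis doubleton_eq_iff)
      show "\<And>x. x \<in> {v \<in> V. E u v} \<Longrightarrow> {u, x} \<in> {e \<in> edges V E. u \<in> e}"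
        using that unfolding edges_def by auto
      show "\<And>y. y \<in> {e \<in> edges V E. u \<in> e} \<Longrightarrow> \<exists>x\<in>{v \<in> V. E u v}. y = {u, x}"
        unfolding edges_def using sym by auto
    qed
    then show ?thesis unfolding degree_def by (metis bij_betw_same_card)
  qed
  have "(\<Sum>u\<in>V. card {e\<in>edges V E. u \<in> e}) = 2 * card (edges V E)"
    using sum_multicount[OF fin finE c2] by simp
  then show ?thesis using deg unfolding num_edges_def by simp
qed

definition NA :: "('a \<Rightarrow> 'a \<Rightarrow> bool) \<Rightarrow> 'a set \<Rightarrow> ('a \<times> 'a) set" where
  "NA E C = {p \<in> C \<times> C. fst p \<noteq> snd p \<and> \<not> E (fst p) (snd p)}"

lemma greedy:
  assumes "finite C" and sym: "\<And>u v. E u v \<Longrightarrow> E v u"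
  shows "\<exists>K. is_clique_in E C K \<and> 2 * card C \<le> 2 * card K + card (NA E C)"
  using assms(1)
proof (induction C rule: finite_induct)
  case empty
  then show ?case by (auto simp: is_clique_in_def)
next
  case (insert x F)
  then obtain K where K: "is_clique_in E F K" "2 * card F \<le> 2 * card K + card (NA E F)" by blast
  have finK: "finite K" using K(1) insert(1) unfolding is_clique_in_def by (meson finite_subset)
  have finNA: "finite (NA E (insert x F))" unfolding NA_def using insert(1) by auto
  have mono: "NA E F \<subseteq> NA E (insert x F)" unfolding NA_def by auto
  show ?case
  proof (cases "\<forall>y\<in>K. E x y")
    case True
    have xK: "x \<notin> K" using K(1) insert(2) unfolding is_clique_in_def by auto
    have "is_clique_in E (insert x F) (insert x K)"
      using K(1) True sym unfolding is_clique_in_def by auto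
    moreover have "card (NA E F) \<le> card (NA E (insert x F))" using card_mono[OF finNA mono] .
    ultimately show ?thesis using K(2) insert(1,2) xK finK
      by (intro exI[of _ "insert x K"]) auto
  next
    case False
    then obtain y where y: "y \<in> K" "\<not> E x y" by auto
    have yF: "y \<in> F" using y K(1) unfolding is_clique_in_def by auto
    have xy: "x \<noteq> y" using yF insert(2) by auto
    have d: "NA E F \<inter> {(x,y),(y,x)} = {}" using insert(2) unfolding NA_def by auto
    have "NA E F \<union> {(x,y),(y,x)} \<subseteq> NA E (insert x F)"
      using mono y yF xy sym unfolding NA_def by auto
    hence "card (NA E F \<union> {(x,y),(y,x)}) \<le> card (NA E (insert x F))"
      using card_mono[OF finNA] by blast
    moreover have "card (NA E F \<union> {(x,y),(y,x)}) = card (NA E F) + 2"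
      using card_Un_disjoint[OF finite_subset[OF mono finNA] _ d] xy by simp
    moreover have "is_clique_in E (insert x F) K" using K(1) unfolding is_clique_in_def by auto
    ultimately show ?thesis using K(2) insert(1,2) by (intro exI[of _ K]) auto
  qed
qed

lemma count_split:
  assumes "finite C" and irr: "\<And>u. \<not> E u u"
  shows "(\<Sum>u\<in>C. \<Sum>v\<in>C. adj E u v) + real (card (NA E C)) + real (card C) = real (card C) ^ 2"
proof -
  have NA: "NA E C = Sigma C (\<lambda>u. {v\<in>C. v \<noteq> u \<and> \<not> E u v})" unfolding NA_def by auto
  have cNA: "card (NA E C) = (\<Sum>u\<in>C. card {v\<in>C. v \<noteq> u \<and> \<not> E u v})"
    unfolding NA using assms(1) by simp
  have inner: "(\<Sum>v\<in>C. adj E u v) + real (card {v\<in>C. v \<noteq> u \<and> \<not> E u v}) + 1 = real (card C)"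
    if u: "u \<in> C" for u
  proof -
    have s: "(\<Sum>v\<in>C. adj E u v) = real (card {v\<in>C. E u v})"
      unfolding adj_def using assms(1) by (simp add: sum.If_cases Int_def)
    have "C = {v\<in>C. E u v} \<union> {v\<in>C. v \<noteq> u \<and> \<not> E u v} \<union> {u}" using u irr by auto
    moreover have "card ({v\<in>C. E u v} \<union> {v\<in>C. v \<noteq> u \<and> \<not> E u v} \<union> {u})
       = card {v\<in>C. E u v} + card {v\<in>C. v \<noteq> u \<and> \<not> E u v} + 1"
    proof -
      define A where "A = {v\<in>C. E u v}"
      define B where "B = {v\<in>C. v \<noteq> u \<and> \<not> E u v}"
      have fA: "finite A" and fB: "finite B" unfolding A_def B_def using assms(1) by auto
      have c1: "card (A \<union> B) = card A + card B"
        by (rule card_Un_disjoint[OF fA fB]) (auto simp: A_def B_def)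
      have "card ((A \<union> B) \<union> {u}) = card (A \<union> B) + card {u}"
        by (rule card_Un_disjoint) (use fA fB irr in \<open>auto simp: A_def B_def\<close>)
      then show ?thesis using c1 unfolding A_def B_def by simp
    qed
    ultimately have "card C = card {v\<in>C. E u v} + card {v\<in>C. v \<noteq> u \<and> \<not> E u v} + 1" by simp
    then show ?thesis using s by simp
  qed
  have "(\<Sum>u\<in>C. \<Sum>v\<in>C. adj E u v) + real (card (NA E C)) + real (card C)
     = (\<Sum>u\<in>C. (\<Sum>v\<in>C. adj E u v) + real (card {v\<in>C. v \<noteq> u \<and> \<not> E u v}) + 1)"
    by (simp add: cNA sum.distrib)
  also have "\<dots> = (\<Sum>u\<in>C. real (card C))" using inner by simp
  also have "\<dots> = real (card C) ^ 2" by (simp add: power2_eq_square)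
  finally show ?thesis .
qed

theorem lemma4:
  fixes V :: "'a set" and E :: "'a \<Rightarrow> 'a \<Rightarrow> bool" and V' :: "'a set"
    and n :: nat and t \<alpha> :: real
  assumes "simple_graph V E"
    and "n = card V" and "n > 4"
    and "regular V E (n - 4)"
    and "V' \<noteq> {}" and "V' \<subseteq> V"
    and "real (card V') = t * real n"
    and "real (clique_number E V') = \<alpha> * real n"
  shows "modularity V E V' \<le> (4 * t ^ 2 + 2 * \<alpha> - 3 * t) / (real n - 4)"
proof -
  have fin: "finite V" and sym: "\<And>u v. E u v \<Longrightarrow> E v u" and irr: "\<And>u. \<not> E u u"
    using assms(1) unfolding simple_graph_def by auto
  have finC: "finite V'" using fin assms(6) by (meson finite_subset)
  define k where "k = real (card V')"
  define w where "w = real (clique_number E V')"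
  define S where "S = (\<Sum>u\<in>V'. \<Sum>v\<in>V'. adj E u v)"
  define d where "d = real n - 4"
  have dpos: "d > 0" using assms(3) unfolding d_def by simp
  have degs: "degree V E u = n - 4" if "u \<in> V" for u using assms(4) that unfolding regular_def by auto
  have rd: "real (n - 4) = d" using assms(3) unfolding d_def by simp
  have "2 * num_edges V E = (\<Sum>u\<in>V. degree V E u)" by (rule handshake[OF assms(1)])
  also have "\<dots> = n * (n - 4)" using degs assms(2) by simp
  finally have m: "2 * real (num_edges V E) = real n * d"
    using rd by (metis of_nat_mult of_nat_numeral)
  have "\<exists>K. is_clique_in E V' K \<and> 2 * card V' \<le> 2 * card K + card (NA E V')"
    by (rule greedy[OF finC]) (rule sym)
  then obtain K where K: "is_clique_in E V' K" "2 * card V' \<le> 2 * card K + card (NA E V')"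
    by blast
  have finset: "finite {card K | K. is_clique_in E V' K}"
  proof -
    have "{card K | K. is_clique_in E V' K} \<subseteq> card ` Pow V'" unfolding is_clique_in_def by auto
    then show ?thesis using finC by (meson finite_Pow_iff finite_imageI finite_subset)
  qed
  have "card K \<le> clique_number E V'" unfolding clique_number_def
    using K(1) finset by (intro Max_ge) auto
  hence "2 * card V' \<le> 2 * clique_number E V' + card (NA E V')" using K(2) by linarith
  hence "real (2 * card V') \<le> real (2 * clique_number E V' + card (NA E V'))"
    by (simp only: of_nat_le_iff)
  hence Kw: "2 * k \<le> 2 * w + real (card (NA E V'))" unfolding k_def w_def by simp
  have cs: "S + real (card (NA E V')) + k = k ^ 2" using count_split[OF finC irr] unfolding S_def k_def .
  have Sle: "S \<le> k^2 - 3 * k + 2 * w" using Kw cs by linarith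
  have dv: "\<And>x. x \<in> V' \<Longrightarrow> real (degree V E x) = d" using degs assms(6) rd by auto
  have modeq: "modularity V E V' = (S - d * k^2 / real n) / (real n * d)"
  proof -
    have "modularity V E V' = (1 / (real n * d)) * (\<Sum>u\<in>V'. \<Sum>v\<in>V'. adj E u v - d * d / (real n * d))"
      unfolding modularity_def Let_def m
      by (intro arg_cong[where f="\<lambda>x. (1 / (real n * d)) * x"] sum.cong refl) (simp add: dv)
    also have "\<dots> = (1 / (real n * d)) * (S - k^2 * (d * d / (real n * d)))"
      unfolding S_def k_def by (simp add: sum_subtractf power2_eq_square)
    also have "\<dots> = (S - d * k^2 / real n) / (real n * d)" using dpos by (simp add: field_simps)
    finally show ?thesis .
  qed
  have npos: "real n > 0" using assms(3) by simp
  have tk: "t = k / real n" using assms(7) npos unfolding k_def by simp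
  have aw: "\<alpha> = w / real n" using assms(8) npos unfolding w_def by simp
  have "S - d * k^2 / real n \<le> real n * (4 * t ^ 2 + 2 * \<alpha> - 3 * t)"
  proof -
    have "real n * (4 * t ^ 2 + 2 * \<alpha> - 3 * t) = 4 * k^2 / real n + 2 * w - 3 * k"
      unfolding tk aw using npos by (simp add: field_simps power2_eq_square)
    moreover have "d * k^2 / real n = k^2 - 4 * k^2 / real n"
      unfolding d_def using npos by (simp add: field_simps)
    ultimately show ?thesis using Sle by linarith
  qed
  hence "(S - d * k^2 / real n) / (real n * d) \<le> real n * (4 * t ^ 2 + 2 * \<alpha> - 3 * t) / (real n * d)"
    using npos dpos by (intro divide_right_mono) auto
  also have "\<dots> = (4 * t ^ 2 + 2 * \<alpha> - 3 * t) / (real n - 4)" using npos unfolding d_def by simp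
  finally show ?thesis using modeq by simp
qed

end
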